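(* Let $X,Y$ be finite presheaves of sets on $\mathscr{V}_f$. Then (1) $X\amalg Y$ is finite; (2) $X\times Y$ is finite; (3) every subpresheaf $U\subset X$ is finite; (4) if $X,Y$ are connected with respective basepoints $x,y$, then the wedge $X\vee Y$ is finite.
   Context: $p$ prime, $\mathbb{F}=\mathbb{F}_p$, $\mathscr{V}_f$ finite-dimensional $\mathbb{F}$-vector spaces; presheaves are contravariant functors $\mathscr{V}_f\to$ Sets, coproduct and product taken sectionwise. $\mathscr{F}$ denotes functors $\mathscr{V}_f^{\mathrm{op}}\to$ ($\mathbb{F}$-vector spaces); such a functor is finite if it has a finite composition series. A presheaf $X$ is finite if there is a monomorphism $X\hookrightarrow F_X$ of presheaves of sets with $F_X\in\mathscr{F}$ finite. $X$ is connected if $|X(0)|=1$; its basepoint is the unique element $x$ of $X(0)$ together with its images in each $X(V)$ (under the map induced by $V\to 0$). The wedge $X\vee Y$ is the coproduct of connected presheaves, i.e. $X$ and $Y$ glued along their basepoints (equivalently the subpresheaf $X\times\{y\}\cup\{x\}\times Y$ of $X\times Y$). *)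

theory Defs
  imports "HOL-Number_Theory.Residues" "HOL-Algebra.Module"
begin

section \<open>The category V_f (skeleton): objects n = F_p^n, morphisms = matrices\<close>

text \<open>A morphism F_p^m -> F_p^n is an n x m matrix A with entries in {0..<p};
  A i j is the entry in row i < n, column j < m; entries outside are 0
  (canonical representation).\<close>

type_synonym mat = "nat \<Rightarrow> nat \<Rightarrow> nat"

definition mor :: "nat \<Rightarrow> nat \<Rightarrow> nat \<Rightarrow> mat set" where
  "mor p m n = {A. (\<forall>i j. A i j < p) \<and> (\<forall>i j. (n \<le> i \<or> m \<le> j) \<longrightarrow> A i j = 0)}"

definition idm :: "nat \<Rightarrow> mat" where
  "idm n = (\<lambda>i j. if i = j \<and> i < n then 1 else 0)"

text \<open>Composition: for A : m -> n and B : n -> k, comp p n B A = B o A : m -> k.\<close>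
definition comp :: "nat \<Rightarrow> nat \<Rightarrow> mat \<Rightarrow> mat \<Rightarrow> mat" where
  "comp p n B A = (\<lambda>i j. (\<Sum>l<n. B i l * A l j) mod p)"

definition is_presheaf :: "nat \<Rightarrow> (nat \<Rightarrow> 'a set) \<Rightarrow> (nat \<Rightarrow> nat \<Rightarrow> mat \<Rightarrow> 'a \<Rightarrow> 'a) \<Rightarrow> bool" where
  "is_presheaf p X act \<longleftrightarrow>
     (\<forall>m n A x. A \<in> mor p m n \<longrightarrow> x \<in> X n \<longrightarrow> act m n A x \<in> X m) \<and>
     (\<forall>n x. x \<in> X n \<longrightarrow> act n n (idm n) x = x) \<and>
     (\<forall>m n k A B x. A \<in> mor p m n \<longrightarrow> B \<in> mor p n k \<longrightarrow> x \<in> X k \<longrightarrow>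
        act m n A (act n k B x) = act m k (comp p n B A) x)"

definition is_nat_trans ::
  "nat \<Rightarrow> (nat \<Rightarrow> 'a set) \<Rightarrow> (nat \<Rightarrow> nat \<Rightarrow> mat \<Rightarrow> 'a \<Rightarrow> 'a) \<Rightarrow>
   (nat \<Rightarrow> 'b set) \<Rightarrow> (nat \<Rightarrow> nat \<Rightarrow> mat \<Rightarrow> 'b \<Rightarrow> 'b) \<Rightarrow> (nat \<Rightarrow> 'a \<Rightarrow> 'b) \<Rightarrow> bool" where
  "is_nat_trans p X actX Y actY \<eta> \<longleftrightarrow>
     (\<forall>n x. x \<in> X n \<longrightarrow> \<eta> n x \<in> Y n) \<and>
     (\<forall>m n A x. A \<in> mor p m n \<longrightarrow> x \<in> X n \<longrightarrow> \<eta> m (actX m n A x) = actY m n A (\<eta> n x))"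

definition is_mono ::
  "nat \<Rightarrow> (nat \<Rightarrow> 'a set) \<Rightarrow> (nat \<Rightarrow> nat \<Rightarrow> mat \<Rightarrow> 'a \<Rightarrow> 'a) \<Rightarrow>
   (nat \<Rightarrow> 'b set) \<Rightarrow> (nat \<Rightarrow> nat \<Rightarrow> mat \<Rightarrow> 'b \<Rightarrow> 'b) \<Rightarrow> (nat \<Rightarrow> 'a \<Rightarrow> 'b) \<Rightarrow> bool" where
  "is_mono p X actX Y actY \<eta> \<longleftrightarrow>
     is_nat_trans p X actX Y actY \<eta> \<and> (\<forall>n. inj_on (\<eta> n) (X n))"

abbreviation Fp :: "nat \<Rightarrow> int ring" where
  "Fp p \<equiv> residue_ring (int p)"

definition is_linear :: "nat \<Rightarrow> (int, 'b) module \<Rightarrow> (int, 'b) module \<Rightarrow> ('b \<Rightarrow> 'b) \<Rightarrow> bool" where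
  "is_linear p V W f \<longleftrightarrow>
     (\<forall>x \<in> carrier V. f x \<in> carrier W) \<and>
     (\<forall>x \<in> carrier V. \<forall>y \<in> carrier V. f (x \<oplus>\<^bsub>V\<^esub> y) = f x \<oplus>\<^bsub>W\<^esub> f y) \<and>
     (\<forall>a \<in> carrier (Fp p). \<forall>x \<in> carrier V. f (a \<odot>\<^bsub>V\<^esub> x) = a \<odot>\<^bsub>W\<^esub> f x)"

definition is_vfunctor :: "nat \<Rightarrow> (nat \<Rightarrow> (int, 'b) module) \<Rightarrow> (nat \<Rightarrow> nat \<Rightarrow> mat \<Rightarrow> 'b \<Rightarrow> 'b) \<Rightarrow> bool" where
  "is_vfunctor p F act \<longleftrightarrow>
     (\<forall>n. module (Fp p) (F n)) \<and>
     (\<forall>m n A. A \<in> mor p m n \<longrightarrow> is_linear p (F n) (F m) (act m n A)) \<and>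
     is_presheaf p (\<lambda>n. carrier (F n)) act"

definition is_subfunctor :: "nat \<Rightarrow> (nat \<Rightarrow> (int, 'b) module) \<Rightarrow> (nat \<Rightarrow> nat \<Rightarrow> mat \<Rightarrow> 'b \<Rightarrow> 'b) \<Rightarrow> (nat \<Rightarrow> 'b set) \<Rightarrow> bool" where
  "is_subfunctor p F act S \<longleftrightarrow>
     (\<forall>n. S n \<subseteq> carrier (F n) \<and> submodule (S n) (Fp p) (F n)) \<and>
     (\<forall>m n A x. A \<in> mor p m n \<longrightarrow> x \<in> S n \<longrightarrow> act m n A x \<in> S m)"

text \<open>By the correspondence theorem,
  S (i+1)/S i is simple iff S i is properly contained in S (i+1) and there is no
  subfunctor strictly between them.\<close>

definition is_composition_series ::
  "nat \<Rightarrow> (nat \<Rightarrow> (int, 'b) module) \<Rightarrow> (nat \<Rightarrow> nat \<Rightarrow> mat \<Rightarrow> 'b \<Rightarrow> 'b) \<Rightarrow> nat \<Rightarrow> (nat \<Rightarrow> nat \<Rightarrow> 'b set) \<Rightarrow> bool" where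
  "is_composition_series p F act k S \<longleftrightarrow>
     (\<forall>i \<le> k. is_subfunctor p F act (S i)) \<and>
     (\<forall>n. S 0 n = {\<zero>\<^bsub>F n\<^esub>}) \<and>
     (\<forall>n. S k n = carrier (F n)) \<and>
     (\<forall>i < k. (\<forall>n. S i n \<subseteq> S (Suc i) n) \<and> S i \<noteq> S (Suc i) \<and>
        \<not> (\<exists>T. is_subfunctor p F act T \<and> (\<forall>n. S i n \<subseteq> T n \<and> T n \<subseteq> S (Suc i) n) \<and>
               T \<noteq> S i \<and> T \<noteq> S (Suc i)))"

definition finite_vfunctor :: "nat \<Rightarrow> (nat \<Rightarrow> (int, 'b) module) \<Rightarrow> (nat \<Rightarrow> nat \<Rightarrow> mat \<Rightarrow> 'b \<Rightarrow> 'b) \<Rightarrow> bool" where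
  "finite_vfunctor p F act \<longleftrightarrow>
     is_vfunctor p F act \<and> (\<exists>k S. is_composition_series p F act k S)"

text \<open>The vector-space-valued functor is taken with elements of type nat; every
  finite functor has finite (hence countable) values, so this loses nothing.\<close>

definition finite_presheaf :: "nat \<Rightarrow> (nat \<Rightarrow> 'a set) \<Rightarrow> (nat \<Rightarrow> nat \<Rightarrow> mat \<Rightarrow> 'a \<Rightarrow> 'a) \<Rightarrow> bool" where
  "finite_presheaf p X act \<longleftrightarrow> is_presheaf p X act \<and>
     (\<exists>(F :: nat \<Rightarrow> (int, nat) module) actF \<eta>.
        finite_vfunctor p F actF \<and> is_mono p X act (\<lambda>n. carrier (F n)) actF \<eta>)"

definition copr_obj :: "(nat \<Rightarrow> 'a set) \<Rightarrow> (nat \<Rightarrow> 'b set) \<Rightarrow> nat \<Rightarrow> ('a + 'b) set" where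
  "copr_obj X Y n = X n <+> Y n"

definition copr_act :: "(nat \<Rightarrow> nat \<Rightarrow> mat \<Rightarrow> 'a \<Rightarrow> 'a) \<Rightarrow> (nat \<Rightarrow> nat \<Rightarrow> mat \<Rightarrow> 'b \<Rightarrow> 'b) \<Rightarrow>
    nat \<Rightarrow> nat \<Rightarrow> mat \<Rightarrow> 'a + 'b \<Rightarrow> 'a + 'b" where
  "copr_act aX aY m n A = map_sum (aX m n A) (aY m n A)"

definition prod_obj :: "(nat \<Rightarrow> 'a set) \<Rightarrow> (nat \<Rightarrow> 'b set) \<Rightarrow> nat \<Rightarrow> ('a \<times> 'b) set" where
  "prod_obj X Y n = X n \<times> Y n"

definition prod_act :: "(nat \<Rightarrow> nat \<Rightarrow> mat \<Rightarrow> 'a \<Rightarrow> 'a) \<Rightarrow> (nat \<Rightarrow> nat \<Rightarrow> mat \<Rightarrow> 'b \<Rightarrow> 'b) \<Rightarrow>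
    nat \<Rightarrow> nat \<Rightarrow> mat \<Rightarrow> 'a \<times> 'b \<Rightarrow> 'a \<times> 'b" where
  "prod_act aX aY m n A = map_prod (aX m n A) (aY m n A)"

definition is_subpresheaf :: "nat \<Rightarrow> (nat \<Rightarrow> 'a set) \<Rightarrow> (nat \<Rightarrow> 'a set) \<Rightarrow> (nat \<Rightarrow> nat \<Rightarrow> mat \<Rightarrow> 'a \<Rightarrow> 'a) \<Rightarrow> bool" where
  "is_subpresheaf p U X act \<longleftrightarrow>
     (\<forall>n. U n \<subseteq> X n) \<and> (\<forall>m n A x. A \<in> mor p m n \<longrightarrow> x \<in> U n \<longrightarrow> act m n A x \<in> U m)"

definition connected :: "(nat \<Rightarrow> 'a set) \<Rightarrow> bool" where
  "connected X \<longleftrightarrow> card (X 0) = 1"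

text \<open>Basepoint at F_p^n: image of the unique element of X 0 under the map
  induced by the (zero) morphism F_p^n -> 0.\<close>
definition basepoint :: "(nat \<Rightarrow> 'a set) \<Rightarrow> (nat \<Rightarrow> nat \<Rightarrow> mat \<Rightarrow> 'a \<Rightarrow> 'a) \<Rightarrow> nat \<Rightarrow> 'a" where
  "basepoint X act n = act n 0 (\<lambda>i j. 0) (the_elem (X 0))"

definition wedge_obj :: "(nat \<Rightarrow> 'a set) \<Rightarrow> (nat \<Rightarrow> nat \<Rightarrow> mat \<Rightarrow> 'a \<Rightarrow> 'a) \<Rightarrow>
    (nat \<Rightarrow> 'b set) \<Rightarrow> (nat \<Rightarrow> nat \<Rightarrow> mat \<Rightarrow> 'b \<Rightarrow> 'b) \<Rightarrow> nat \<Rightarrow> ('a \<times> 'b) set" where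
  "wedge_obj X aX Y aY n = X n \<times> {basepoint Y aY n} \<union> {basepoint X aX n} \<times> Y n"

end

theory Submission
  imports Defs "HOL-Library.Nat_Bijection"
begin


definition pf :: "nat \<Rightarrow> nat" where "pf x = fst (prod_decode x)"
definition ps :: "nat \<Rightarrow> nat" where "ps x = snd (prod_decode x)"
definition pe :: "nat \<Rightarrow> nat \<Rightarrow> nat" where "pe a b = prod_encode (a, b)"

lemma pf_pe[simp]: "pf (pe a b) = a" by (simp add: pf_def pe_def)
lemma ps_pe[simp]: "ps (pe a b) = b" by (simp add: ps_def pe_def)
lemma pe_pf_ps[simp]: "pe (pf x) (ps x) = x" by (simp add: pf_def ps_def pe_def)
lemma pe_eq[simp]: "pe a b = pe c d \<longleftrightarrow> a = c \<and> b = d"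
  by (metis pf_pe ps_pe)
lemma nat_eqI: "pf x = pf y \<Longrightarrow> ps x = ps y \<Longrightarrow> x = y"
  by (metis pe_pf_ps)

definition dsum :: "(int, nat) module \<Rightarrow> (int, nat) module \<Rightarrow> (int, nat) module" where
  "dsum M N = \<lparr>carrier = {x. pf x \<in> carrier M \<and> ps x \<in> carrier N},
     monoid.mult = (\<lambda>x y. x), one = 0, zero = pe \<zero>\<^bsub>M\<^esub> \<zero>\<^bsub>N\<^esub>,
     add = (\<lambda>x y. pe (pf x \<oplus>\<^bsub>M\<^esub> pf y) (ps x \<oplus>\<^bsub>N\<^esub> ps y)),
     smult = (\<lambda>a x. pe (a \<odot>\<^bsub>M\<^esub> pf x) (a \<odot>\<^bsub>N\<^esub> ps x))\<rparr>"

lemma dsum_simps[simp]: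
  "carrier (dsum M N) = {x. pf x \<in> carrier M \<and> ps x \<in> carrier N}"
  "\<zero>\<^bsub>dsum M N\<^esub> = pe \<zero>\<^bsub>M\<^esub> \<zero>\<^bsub>N\<^esub>"
  "x \<oplus>\<^bsub>dsum M N\<^esub> y = pe (pf x \<oplus>\<^bsub>M\<^esub> pf y) (ps x \<oplus>\<^bsub>N\<^esub> ps y)"
  "a \<odot>\<^bsub>dsum M N\<^esub> x = pe (a \<odot>\<^bsub>M\<^esub> pf x) (a \<odot>\<^bsub>N\<^esub> ps x)"
  by (simp_all add: dsum_def)

lemma dsum_module:
  assumes M: "module R M" and N: "module R N"
  shows "module R (dsum M N)"
proof -
  interpret M: module R M by (rule M)
  interpret N: module R N by (rule N)
  show ?thesis
  proof (rule moduleI)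
    show "cring R" by (rule M.is_cring)
    show "abelian_group (dsum M N)"
    proof (rule abelian_groupI)
      fix x assume x: "x \<in> carrier (dsum M N)"
      show "\<exists>y \<in> carrier (dsum M N). y \<oplus>\<^bsub>dsum M N\<^esub> x = \<zero>\<^bsub>dsum M N\<^esub>"
        using x by (intro bexI[of _ "pe (\<ominus>\<^bsub>M\<^esub> pf x) (\<ominus>\<^bsub>N\<^esub> ps x)"]) (auto simp: M.l_neg N.l_neg)
    qed (auto simp: M.a_ac N.a_ac)
  qed (auto simp: M.smult_l_distr N.smult_l_distr M.smult_r_distr N.smult_r_distr
         M.smult_assoc1 N.smult_assoc1)
qed

lemma dsum_inv:
  assumes M: "module R M" and N: "module R N" and x: "x \<in> carrier (dsum M N)"
  shows "\<ominus>\<^bsub>dsum M N\<^esub> x = pe (\<ominus>\<^bsub>M\<^esub> pf x) (\<ominus>\<^bsub>N\<^esub> ps x)"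
proof -
  interpret M: module R M by (rule M)
  interpret N: module R N by (rule N)
  interpret D: module R "dsum M N" by (rule dsum_module[OF M N])
  show ?thesis
    by (rule D.minus_equality) (use x in \<open>auto simp: M.l_neg N.l_neg\<close>)
qed




definition dact :: "(nat \<Rightarrow> nat \<Rightarrow> mat \<Rightarrow> nat \<Rightarrow> nat) \<Rightarrow> (nat \<Rightarrow> nat \<Rightarrow> mat \<Rightarrow> nat \<Rightarrow> nat) \<Rightarrow> nat \<Rightarrow> nat \<Rightarrow> mat \<Rightarrow> nat \<Rightarrow> nat" where
  "dact aF aG m n A x = pe (aF m n A (pf x)) (aG m n A (ps x))"

definition prodset :: "nat set \<Rightarrow> nat set \<Rightarrow> nat set" where
  "prodset A B = {x. pf x \<in> A \<and> ps x \<in> B}"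

lemma linear_zero:
  assumes V: "module (Fp p) V" and W: "module (Fp p) W" and f: "is_linear p V W f"
  shows "f \<zero>\<^bsub>V\<^esub> = \<zero>\<^bsub>W\<^esub>"
proof -
  interpret V: module "Fp p" V by (rule V)
  interpret W: module "Fp p" W by (rule W)
  have c: "f \<zero>\<^bsub>V\<^esub> \<in> carrier W" using f unfolding is_linear_def by auto
  have "f \<zero>\<^bsub>V\<^esub> = f (\<zero>\<^bsub>V\<^esub> \<oplus>\<^bsub>V\<^esub> \<zero>\<^bsub>V\<^esub>)" by simp
  also have "\<dots> = f \<zero>\<^bsub>V\<^esub> \<oplus>\<^bsub>W\<^esub> f \<zero>\<^bsub>V\<^esub>"
  proof -
    have "\<forall>x\<in>carrier V. \<forall>y\<in>carrier V. f (x \<oplus>\<^bsub>V\<^esub> y) = f x \<oplus>\<^bsub>W\<^esub> f y" using f by (simp add: is_linear_def)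
    from this[rule_format, OF V.zero_closed V.zero_closed] show ?thesis .
  qed
  finally have "f \<zero>\<^bsub>V\<^esub> = f \<zero>\<^bsub>V\<^esub> \<oplus>\<^bsub>W\<^esub> f \<zero>\<^bsub>V\<^esub>" .
  thus ?thesis using c W.add.l_cancel_one'[OF c c] by simp
qed

lemma vf_module: "is_vfunctor p F aF \<Longrightarrow> module (Fp p) (F n)"
  by (simp add: is_vfunctor_def)

lemma vf_lin: "is_vfunctor p F aF \<Longrightarrow> A \<in> mor p m n \<Longrightarrow> is_linear p (F n) (F m) (aF m n A)"
  by (simp add: is_vfunctor_def)

lemma vf_zero: assumes "is_vfunctor p F aF" "A \<in> mor p m n" shows "aF m n A \<zero>\<^bsub>F n\<^esub> = \<zero>\<^bsub>F m\<^esub>"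
  by (rule linear_zero[OF vf_module[OF assms(1), of n] vf_module[OF assms(1), of m] vf_lin[OF assms]])

lemma vf_closed: "is_vfunctor p F aF \<Longrightarrow> A \<in> mor p m n \<Longrightarrow> x \<in> carrier (F n) \<Longrightarrow> aF m n A x \<in> carrier (F m)"
  by (simp add: is_vfunctor_def is_presheaf_def)

lemma dsum_vfunctor:
  assumes F: "is_vfunctor p F aF" and G: "is_vfunctor p G aG"
  shows "is_vfunctor p (\<lambda>n. dsum (F n) (G n)) (dact aF aG)"
  unfolding is_vfunctor_def
proof (intro conjI allI impI)
  fix n show "module (Fp p) (dsum (F n) (G n))"
    using F G by (simp add: dsum_module vf_module)
next
  fix m n A assume A: "A \<in> mor p m n"
  show "is_linear p (dsum (F n) (G n)) (dsum (F m) (G m)) (dact aF aG m n A)"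
    using vf_lin[OF F A] vf_lin[OF G A] unfolding is_linear_def by (auto simp: dact_def)
next
  show "is_presheaf p (\<lambda>n. carrier (dsum (F n) (G n))) (dact aF aG)"
    using F G unfolding is_vfunctor_def is_presheaf_def by (auto simp: dact_def)
qed

lemma sub_facts:
  assumes F: "is_vfunctor p F aF" and S: "is_subfunctor p F aF A"
  shows "A n \<subseteq> carrier (F n)" "\<zero>\<^bsub>F n\<^esub> \<in> A n"
    "\<And>a. a \<in> A n \<Longrightarrow> \<ominus>\<^bsub>F n\<^esub> a \<in> A n"
    "\<And>a b. a \<in> A n \<Longrightarrow> b \<in> A n \<Longrightarrow> a \<oplus>\<^bsub>F n\<^esub> b \<in> A n"
    "\<And>a b. a \<in> carrier (Fp p) \<Longrightarrow> b \<in> A n \<Longrightarrow> a \<odot>\<^bsub>F n\<^esub> b \<in> A n"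
    "\<And>m B x. B \<in> mor p m n \<Longrightarrow> x \<in> A n \<Longrightarrow> aF m n B x \<in> A m"
proof -
  interpret M: module "Fp p" "F n" using F by (rule vf_module)
  have sm: "submodule (A n) (Fp p) (F n)" using S by (simp add: is_subfunctor_def)
  interpret S: submodule "A n" "Fp p" "F n" by (rule sm)
  show "A n \<subseteq> carrier (F n)" using M.submoduleE(1)[OF sm] .
  show "\<zero>\<^bsub>F n\<^esub> \<in> A n" using S.one_closed by simp
  show "\<And>a. a \<in> A n \<Longrightarrow> \<ominus>\<^bsub>F n\<^esub> a \<in> A n" using M.submoduleE(3)[OF sm] .
  show "\<And>a b. a \<in> A n \<Longrightarrow> b \<in> A n \<Longrightarrow> a \<oplus>\<^bsub>F n\<^esub> b \<in> A n" using M.submoduleE(5)[OF sm] .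
  show "\<And>a b. a \<in> carrier (Fp p) \<Longrightarrow> b \<in> A n \<Longrightarrow> a \<odot>\<^bsub>F n\<^esub> b \<in> A n" using M.submoduleE(4)[OF sm] .
  show "\<And>m B x. B \<in> mor p m n \<Longrightarrow> x \<in> A n \<Longrightarrow> aF m n B x \<in> A m" using S
    by (simp add: is_subfunctor_def)
qed

lemma subfunctorI:
  assumes F: "is_vfunctor p F aF"
    and "\<And>n. A n \<subseteq> carrier (F n)" "\<And>n. \<zero>\<^bsub>F n\<^esub> \<in> A n"
    "\<And>n a. a \<in> A n \<Longrightarrow> \<ominus>\<^bsub>F n\<^esub> a \<in> A n"
    "\<And>n a b. a \<in> A n \<Longrightarrow> b \<in> A n \<Longrightarrow> a \<oplus>\<^bsub>F n\<^esub> b \<in> A n"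
    "\<And>n a b. a \<in> carrier (Fp p) \<Longrightarrow> b \<in> A n \<Longrightarrow> a \<odot>\<^bsub>F n\<^esub> b \<in> A n"
    "\<And>n m B x. B \<in> mor p m n \<Longrightarrow> x \<in> A n \<Longrightarrow> aF m n B x \<in> A m"
  shows "is_subfunctor p F aF A"
  unfolding is_subfunctor_def
proof (intro conjI allI impI)
  fix n
  interpret M: module "Fp p" "F n" using F by (rule vf_module)
  show "A n \<subseteq> carrier (F n)" by fact
  show "submodule (A n) (Fp p) (F n)" by (rule M.submoduleI) (rule assms; assumption)+
next
  fix m n B x assume "B \<in> mor p m n" "x \<in> A n" thus "aF m n B x \<in> A m" by (rule assms)
qed

lemma zero_subfunctor: assumes F: "is_vfunctor p F aF" shows "is_subfunctor p F aF (\<lambda>n. {\<zero>\<^bsub>F n\<^esub>})"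
proof (rule subfunctorI[OF F])
  fix n
  interpret M: module "Fp p" "F n" using F by (rule vf_module)
  show "{\<zero>\<^bsub>F n\<^esub>} \<subseteq> carrier (F n)" by simp
  show "\<zero>\<^bsub>F n\<^esub> \<in> {\<zero>\<^bsub>F n\<^esub>}" by simp
  show "\<And>a. a \<in> {\<zero>\<^bsub>F n\<^esub>} \<Longrightarrow> \<ominus>\<^bsub>F n\<^esub> a \<in> {\<zero>\<^bsub>F n\<^esub>}" by simp
  show "\<And>a b. a \<in> {\<zero>\<^bsub>F n\<^esub>} \<Longrightarrow> b \<in> {\<zero>\<^bsub>F n\<^esub>} \<Longrightarrow> a \<oplus>\<^bsub>F n\<^esub> b \<in> {\<zero>\<^bsub>F n\<^esub>}" by simp
  show "\<And>a b. a \<in> carrier (Fp p) \<Longrightarrow> b \<in> {\<zero>\<^bsub>F n\<^esub>} \<Longrightarrow> a \<odot>\<^bsub>F n\<^esub> b \<in> {\<zero>\<^bsub>F n\<^esub>}" by simp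
  show "\<And>m B x. B \<in> mor p m n \<Longrightarrow> x \<in> {\<zero>\<^bsub>F n\<^esub>} \<Longrightarrow> aF m n B x \<in> {\<zero>\<^bsub>F m\<^esub>}"
    using vf_zero[OF F] by simp
qed

lemma carrier_subfunctor: assumes F: "is_vfunctor p F aF" shows "is_subfunctor p F aF (\<lambda>n. carrier (F n))"
proof (rule subfunctorI[OF F])
  fix n
  interpret M: module "Fp p" "F n" using F by (rule vf_module)
  show "carrier (F n) \<subseteq> carrier (F n)" by simp
  show "\<zero>\<^bsub>F n\<^esub> \<in> carrier (F n)" by simp
  show "\<And>a. a \<in> carrier (F n) \<Longrightarrow> \<ominus>\<^bsub>F n\<^esub> a \<in> carrier (F n)" by simp
  show "\<And>a b. a \<in> carrier (F n) \<Longrightarrow> b \<in> carrier (F n) \<Longrightarrow> a \<oplus>\<^bsub>F n\<^esub> b \<in> carrier (F n)" by simp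
  show "\<And>a b. a \<in> carrier (Fp p) \<Longrightarrow> b \<in> carrier (F n) \<Longrightarrow> a \<odot>\<^bsub>F n\<^esub> b \<in> carrier (F n)" by simp
  show "\<And>m B x. B \<in> mor p m n \<Longrightarrow> x \<in> carrier (F n) \<Longrightarrow> aF m n B x \<in> carrier (F m)"
    using vf_closed[OF F] by simp
qed

lemma prod_subfunctor:
  assumes F: "is_vfunctor p F aF" and G: "is_vfunctor p G aG"
    and A: "is_subfunctor p F aF A" and B: "is_subfunctor p G aG B"
  shows "is_subfunctor p (\<lambda>n. dsum (F n) (G n)) (dact aF aG) (\<lambda>n. prodset (A n) (B n))"
proof (rule subfunctorI[OF dsum_vfunctor[OF F G]])
  note a = sub_facts[OF F A] and b = sub_facts[OF G B]
  fix n
  show "prodset (A n) (B n) \<subseteq> carrier (dsum (F n) (G n))" using a(1) b(1) by (auto simp: prodset_def)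
  show "\<zero>\<^bsub>dsum (F n) (G n)\<^esub> \<in> prodset (A n) (B n)" using a(2) b(2) by (auto simp: prodset_def)
  show "\<And>x. x \<in> prodset (A n) (B n) \<Longrightarrow> \<ominus>\<^bsub>dsum (F n) (G n)\<^esub> x \<in> prodset (A n) (B n)"
    using a(1,3) b(1,3) subsetD[OF a(1)] subsetD[OF b(1)] by (subst dsum_inv[OF vf_module[OF F] vf_module[OF G]]) (auto simp: prodset_def)
  show "\<And>x y. x \<in> prodset (A n) (B n) \<Longrightarrow> y \<in> prodset (A n) (B n) \<Longrightarrow> x \<oplus>\<^bsub>dsum (F n) (G n)\<^esub> y \<in> prodset (A n) (B n)"
    using a(4) b(4) by (auto simp: prodset_def)
  show "\<And>c x. c \<in> carrier (Fp p) \<Longrightarrow> x \<in> prodset (A n) (B n) \<Longrightarrow> c \<odot>\<^bsub>dsum (F n) (G n)\<^esub> x \<in> prodset (A n) (B n)"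
    using a(5) b(5) by (auto simp: prodset_def)
  show "\<And>m C x. C \<in> mor p m n \<Longrightarrow> x \<in> prodset (A n) (B n) \<Longrightarrow> dact aF aG m n C x \<in> prodset (A m) (B m)"
    using sub_facts(6)[OF F A] sub_facts(6)[OF G B] by (auto simp: prodset_def dact_def)
qed

context
  fixes p F aF assumes F: "is_vfunctor p F aF"
begin
interpretation M: module "Fp p" "F n" for n using F by (rule vf_module)

lemma vfz[simp]: "\<zero>\<^bsub>F n\<^esub> \<in> carrier (F n)" by simp
lemma vf_add[simp]: "a \<in> carrier (F n) \<Longrightarrow> b \<in> carrier (F n) \<Longrightarrow> a \<oplus>\<^bsub>F n\<^esub> b \<in> carrier (F n)" by simp
lemma vf_neg[simp]: "a \<in> carrier (F n) \<Longrightarrow> \<ominus>\<^bsub>F n\<^esub> a \<in> carrier (F n)" by simp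
lemma vf_lz[simp]: "a \<in> carrier (F n) \<Longrightarrow> \<zero>\<^bsub>F n\<^esub> \<oplus>\<^bsub>F n\<^esub> a = a" by simp
lemma vf_rz[simp]: "a \<in> carrier (F n) \<Longrightarrow> a \<oplus>\<^bsub>F n\<^esub> \<zero>\<^bsub>F n\<^esub> = a" by simp
lemma vf_rneg[simp]: "a \<in> carrier (F n) \<Longrightarrow> a \<oplus>\<^bsub>F n\<^esub> \<ominus>\<^bsub>F n\<^esub> a = \<zero>\<^bsub>F n\<^esub>" by (simp add: M.r_neg)
lemma vf_mz[simp]: "\<ominus>\<^bsub>F n\<^esub> \<zero>\<^bsub>F n\<^esub> = \<zero>\<^bsub>F n\<^esub>" by (rule M.minus_equality) simp_all
lemma vf_sz[simp]: "c \<in> carrier (Fp p) \<Longrightarrow> c \<odot>\<^bsub>F n\<^esub> \<zero>\<^bsub>F n\<^esub> = \<zero>\<^bsub>F n\<^esub>" by simp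
end

lemma cs_facts:
  assumes a: "is_composition_series p F aF k S"
  shows "\<And>i. i \<le> k \<Longrightarrow> is_subfunctor p F aF (S i)"
    "\<And>n. S 0 n = {\<zero>\<^bsub>F n\<^esub>}" "\<And>n. S k n = carrier (F n)"
    "\<And>i n. i < k \<Longrightarrow> S i n \<subseteq> S (Suc i) n"
    "\<And>i. i < k \<Longrightarrow> S i \<noteq> S (Suc i)"
    "\<And>i U. i < k \<Longrightarrow> is_subfunctor p F aF U \<Longrightarrow> (\<And>n. S i n \<subseteq> U n) \<Longrightarrow> (\<And>n. U n \<subseteq> S (Suc i) n)
       \<Longrightarrow> U = S i \<or> U = S (Suc i)"
proof -
  note d = a[unfolded is_composition_series_def]
  show "\<And>i. i \<le> k \<Longrightarrow> is_subfunctor p F aF (S i)" using d by simp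
  show "\<And>n. S 0 n = {\<zero>\<^bsub>F n\<^esub>}" using d by simp
  show "\<And>n. S k n = carrier (F n)" using d by simp
  show "\<And>i n. i < k \<Longrightarrow> S i n \<subseteq> S (Suc i) n" using d by simp
  show "\<And>i. i < k \<Longrightarrow> S i \<noteq> S (Suc i)" using d by simp
  fix i U assume i: "i < k" and U: "is_subfunctor p F aF U" and b1: "\<And>n. S i n \<subseteq> U n" and b2: "\<And>n. U n \<subseteq> S (Suc i) n"
  have "\<not> (\<exists>T. is_subfunctor p F aF T \<and> (\<forall>n. S i n \<subseteq> T n \<and> T n \<subseteq> S (Suc i) n) \<and> T \<noteq> S i \<and> T \<noteq> S (Suc i))"
    using d i by blast
  then show "U = S i \<or> U = S (Suc i)" using U b1 b2 by blast
qed

lemma dsum_series: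
  assumes F: "is_vfunctor p F aF" and G: "is_vfunctor p G aG"
    and cs: "is_composition_series p F aF k S" and ct: "is_composition_series p G aG l T"
  shows "is_composition_series p (\<lambda>n. dsum (F n) (G n)) (dact aF aG) (k + l)
     (\<lambda>i n. if i \<le> k then prodset (S i n) {\<zero>\<^bsub>G n\<^esub>} else prodset (carrier (F n)) (T (i - k) n))"
    (is "is_composition_series p ?D ?a _ ?R")
proof -
  note s = cs_facts[OF cs] and t = cs_facts[OF ct]
  note fs = vfz[OF F] vf_add[OF F] vf_neg[OF F] vf_lz[OF F] vf_rz[OF F] vf_rneg[OF F] vf_mz[OF F] vf_sz[OF F]
  note gs = vfz[OF G] vf_add[OF G] vf_neg[OF G] vf_lz[OF G] vf_rz[OF G] vf_rneg[OF G] vf_mz[OF G] vf_sz[OF G]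
  have D: "is_vfunctor p ?D ?a" by (rule dsum_vfunctor[OF F G])
  define R where "R = ?R"
  have lo: "R i n = prodset (S i n) {\<zero>\<^bsub>G n\<^esub>}" if "i \<le> k" for i n
    using that by (simp add: R_def)
  have hi: "R i n = prodset (carrier (F n)) (T (i - k) n)" if "k \<le> i" for i n
    using that s(3) t(2) by (auto simp: R_def)
  have Ssub: "S i n \<subseteq> carrier (F n)" if "i \<le> k" for i n
    using sub_facts(1)[OF F s(1)[OF that]] .
  have Tsub: "T j n \<subseteq> carrier (G n)" if "j \<le> l" for j n
    using sub_facts(1)[OF G t(1)[OF that]] .
  have sub: "is_subfunctor p ?D ?a (R i)" if "i \<le> k + l" for i
  proof (cases "i \<le> k")
    case True
    then show ?thesis using prod_subfunctor[OF F G s(1)[OF True] zero_subfunctor[OF G]] by (simp add: R_def)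
  next
    case False
    then have "i - k \<le> l" using that by simp
    then show ?thesis using prod_subfunctor[OF F G carrier_subfunctor[OF F] t(1)] False by (simp add: R_def)
  qed
  have zero: "R 0 n = {\<zero>\<^bsub>?D n\<^esub>}" for n
    using s(2) by (auto simp: lo prodset_def intro: nat_eqI)
  have top: "R (k + l) n = carrier (?D n)" for n
    using hi[of "k + l" n] t(3) by (auto simp: prodset_def)
  have step: "(\<forall>n. R i n \<subseteq> R (Suc i) n) \<and> R i \<noteq> R (Suc i) \<and>
        \<not> (\<exists>U. is_subfunctor p ?D ?a U \<and> (\<forall>n. R i n \<subseteq> U n \<and> U n \<subseteq> R (Suc i) n) \<and>
               U \<noteq> R i \<and> U \<noteq> R (Suc i))" if i: "i < k + l" for i
  proof (cases "i < k")
    case True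
    have Ri: "R i n = prodset (S i n) {\<zero>\<^bsub>G n\<^esub>}" "R (Suc i) n = prodset (S (Suc i) n) {\<zero>\<^bsub>G n\<^esub>}" for n
      using True by (auto simp: lo)
    have mono: "\<forall>n. R i n \<subseteq> R (Suc i) n" using s(4)[OF True] True Ri by (auto simp: prodset_def)
    have ne: "R i \<noteq> R (Suc i)"
    proof
      assume eq: "R i = R (Suc i)"
      have "S i n = S (Suc i) n" for n
      proof -
        have "R i n = R (Suc i) n" by (rule fun_cong[OF eq])
        then have "prodset (S i n) {\<zero>\<^bsub>G n\<^esub>} = prodset (S (Suc i) n) {\<zero>\<^bsub>G n\<^esub>}" using True Ri by simp
        then have "\<forall>a. pe a \<zero>\<^bsub>G n\<^esub> \<in> prodset (S i n) {\<zero>\<^bsub>G n\<^esub>} \<longleftrightarrow> pe a \<zero>\<^bsub>G n\<^esub> \<in> prodset (S (Suc i) n) {\<zero>\<^bsub>G n\<^esub>}" by simp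
        then show ?thesis by (auto simp: prodset_def)
      qed
      then show False using s(5)[OF True] by blast
    qed
    have nb: "U = R i \<or> U = R (Suc i)" if U: "is_subfunctor p ?D ?a U"
      and b1: "\<And>n. R i n \<subseteq> U n" and b2: "\<And>n. U n \<subseteq> R (Suc i) n" for U
    proof -
      define V where "V n = {a. pe a \<zero>\<^bsub>G n\<^esub> \<in> U n}" for n
      note u = sub_facts[OF D U]
      have Vc: "V n \<subseteq> S (Suc i) n" for n using b2[of n] using True Ri unfolding V_def prodset_def by auto
      have Vc': "a \<in> V n \<Longrightarrow> a \<in> carrier (F n)" for a n using Vc Ssub[of "Suc i" n] True by auto
      have Vs: "is_subfunctor p F aF V"
      proof (rule subfunctorI[OF F])
        fix n
        show "V n \<subseteq> carrier (F n)" using Vc' by auto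
        show "\<zero>\<^bsub>F n\<^esub> \<in> V n" using u(2)[of n] by (simp add: V_def)
        show "\<ominus>\<^bsub>F n\<^esub> a \<in> V n" if "a \<in> V n" for a
          using u(3)[of "pe a \<zero>\<^bsub>G n\<^esub>" n] that Vc'[OF that]
          by (simp add: V_def dsum_inv[OF vf_module[OF F] vf_module[OF G]] gs)
        show "a \<oplus>\<^bsub>F n\<^esub> b \<in> V n" if "a \<in> V n" "b \<in> V n" for a b
          using u(4)[of "pe a \<zero>\<^bsub>G n\<^esub>" n "pe b \<zero>\<^bsub>G n\<^esub>"] that by (simp add: V_def gs)
        show "c \<odot>\<^bsub>F n\<^esub> a \<in> V n" if "c \<in> carrier (Fp p)" "a \<in> V n" for c a
          using u(5)[of c "pe a \<zero>\<^bsub>G n\<^esub>" n] that by (simp add: V_def gs)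
        show "aF m n B a \<in> V m" if "B \<in> mor p m n" "a \<in> V n" for m B a
          using u(6)[of B m n "pe a \<zero>\<^bsub>G n\<^esub>"] that by (simp add: V_def dact_def vf_zero[OF G])
      qed
      have V1: "S i n \<subseteq> V n" for n using b1[of n] using True Ri unfolding V_def prodset_def by auto
      have UV: "U n = prodset (V n) {\<zero>\<^bsub>G n\<^esub>}" for n
      proof
        show "U n \<subseteq> prodset (V n) {\<zero>\<^bsub>G n\<^esub>}"
        proof
          fix x assume x: "x \<in> U n"
          then have ps: "ps x = \<zero>\<^bsub>G n\<^esub>" using b2[of n] using True Ri unfolding prodset_def by auto
          then have e: "pe (pf x) \<zero>\<^bsub>G n\<^esub> = x" by (metis pe_pf_ps)
          show "x \<in> prodset (V n) {\<zero>\<^bsub>G n\<^esub>}" using x ps e unfolding V_def prodset_def by simp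
        qed
        show "prodset (V n) {\<zero>\<^bsub>G n\<^esub>} \<subseteq> U n"
        proof
          fix x assume x: "x \<in> prodset (V n) {\<zero>\<^bsub>G n\<^esub>}"
          then have e: "pe (pf x) \<zero>\<^bsub>G n\<^esub> = x" unfolding prodset_def by (metis mem_Collect_eq pe_pf_ps singletonD)
          have "pe (pf x) \<zero>\<^bsub>G n\<^esub> \<in> U n" using x unfolding V_def prodset_def by simp
          then show "x \<in> U n" using e by simp
        qed
      qed
      have "V = S i \<or> V = S (Suc i)" using s(6)[OF True Vs V1 Vc] .
      then show ?thesis
      proof
        assume "V = S i" then have "U = R i" using UV True Ri by (intro ext) simp
        then show ?thesis ..
      next
        assume "V = S (Suc i)" then have "U = R (Suc i)" using UV True Ri by (intro ext) simp
        then show ?thesis ..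
      qed
    qed
    show ?thesis using mono ne nb by blast
  next
    case False
    define j where "j = i - k"
    have j: "j < l" "i - k = j" "Suc i - k = Suc j" using False i by (auto simp: j_def)
    have Ri: "R i n = prodset (carrier (F n)) (T j n)" "R (Suc i) n = prodset (carrier (F n)) (T (Suc j) n)" for n
      using hi[of i n] hi[of "Suc i" n] False j by auto
    have mono: "\<forall>n. R i n \<subseteq> R (Suc i) n" using t(4)[OF j(1)] Ri by (auto simp: prodset_def)
    have ne: "R i \<noteq> R (Suc i)"
    proof
      assume eq: "R i = R (Suc i)"
      have "T j n = T (Suc j) n" for n
      proof -
        have "R i n = R (Suc i) n" by (rule fun_cong[OF eq])
        then have "prodset (carrier (F n)) (T j n) = prodset (carrier (F n)) (T (Suc j) n)" using Ri by simp
        then have "\<forall>b. pe \<zero>\<^bsub>F n\<^esub> b \<in> prodset (carrier (F n)) (T j n) \<longleftrightarrow> pe \<zero>\<^bsub>F n\<^esub> b \<in> prodset (carrier (F n)) (T (Suc j) n)" by simp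
        then show ?thesis by (auto simp: prodset_def fs)
      qed
      then show False using t(5)[OF j(1)] by blast
    qed
    have nb: "U = R i \<or> U = R (Suc i)" if U: "is_subfunctor p ?D ?a U"
      and b1: "\<And>n. R i n \<subseteq> U n" and b2: "\<And>n. U n \<subseteq> R (Suc i) n" for U
    proof -
      define V where "V n = {b. pe \<zero>\<^bsub>F n\<^esub> b \<in> U n}" for n
      note u = sub_facts[OF D U]
      have Vc: "V n \<subseteq> T (Suc j) n" for n using b2[of n] using False j Ri unfolding V_def prodset_def by auto
      have Vc': "b \<in> V n \<Longrightarrow> b \<in> carrier (G n)" for b n using Vc Tsub[of "Suc j" n] j by auto
      have Vs: "is_subfunctor p G aG V"
      proof (rule subfunctorI[OF G])
        fix n
        show "V n \<subseteq> carrier (G n)" using Vc' by auto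
        show "\<zero>\<^bsub>G n\<^esub> \<in> V n" using u(2)[of n] by (simp add: V_def)
        show "\<ominus>\<^bsub>G n\<^esub> a \<in> V n" if "a \<in> V n" for a
          using u(3)[of "pe \<zero>\<^bsub>F n\<^esub> a" n] that Vc'[OF that]
          by (simp add: V_def dsum_inv[OF vf_module[OF F] vf_module[OF G]] fs)
        show "a \<oplus>\<^bsub>G n\<^esub> b \<in> V n" if "a \<in> V n" "b \<in> V n" for a b
          using u(4)[of "pe \<zero>\<^bsub>F n\<^esub> a" n "pe \<zero>\<^bsub>F n\<^esub> b"] that by (simp add: V_def fs)
        show "c \<odot>\<^bsub>G n\<^esub> a \<in> V n" if "c \<in> carrier (Fp p)" "a \<in> V n" for c a
          using u(5)[of c "pe \<zero>\<^bsub>F n\<^esub> a" n] that by (simp add: V_def fs)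
        show "aG m n B a \<in> V m" if "B \<in> mor p m n" "a \<in> V n" for m B a
          using u(6)[of B m n "pe \<zero>\<^bsub>F n\<^esub> a"] that by (simp add: V_def dact_def vf_zero[OF F])
      qed
      have V1: "T j n \<subseteq> V n" for n using b1[of n] using False j Ri unfolding V_def prodset_def by (auto simp: fs)
      have UV: "U n = prodset (carrier (F n)) (V n)" for n
      proof
        show "U n \<subseteq> prodset (carrier (F n)) (V n)"
        proof
          fix x assume x: "x \<in> U n"
          then have xc: "pf x \<in> carrier (F n)" "ps x \<in> carrier (G n)"
            using b2[of n] Tsub[of "Suc j" n] j using False j Ri unfolding prodset_def by auto
          have "pe (\<ominus>\<^bsub>F n\<^esub> pf x) \<zero>\<^bsub>G n\<^esub> \<in> R i n"
            using False j Ri unfolding prodset_def using xc sub_facts(2)[OF G t(1)[of j]] j by (simp add: fs)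
          then have "pe (\<ominus>\<^bsub>F n\<^esub> pf x) \<zero>\<^bsub>G n\<^esub> \<in> U n" using b1 by blast
          from u(4)[OF x this] have "pe \<zero>\<^bsub>F n\<^esub> (ps x) \<in> U n" using xc by (simp add: fs gs)
          then show "x \<in> prodset (carrier (F n)) (V n)" using xc unfolding V_def prodset_def by auto
        qed
        show "prodset (carrier (F n)) (V n) \<subseteq> U n"
        proof
          fix x assume x: "x \<in> prodset (carrier (F n)) (V n)"
          then have xc: "pf x \<in> carrier (F n)" "ps x \<in> carrier (G n)" "pe \<zero>\<^bsub>F n\<^esub> (ps x) \<in> U n"
            using Vc' unfolding prodset_def V_def by auto
          have "pe (pf x) \<zero>\<^bsub>G n\<^esub> \<in> R i n"
            using False j Ri unfolding prodset_def using xc sub_facts(2)[OF G t(1)[of j]] j by (simp add: fs)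
          then have "pe (pf x) \<zero>\<^bsub>G n\<^esub> \<in> U n" using b1 by blast
          from u(4)[OF this xc(3)] show "x \<in> U n" using xc by (simp add: fs gs)
        qed
      qed
      have "V = T j \<or> V = T (Suc j)" using t(6)[OF j(1) Vs V1 Vc] .
      then show ?thesis
      proof
        assume "V = T j" then have "U = R i" using UV False j Ri by (intro ext) simp
        then show ?thesis ..
      next
        assume "V = T (Suc j)" then have "U = R (Suc i)" using UV False j Ri by (intro ext) simp
        then show ?thesis ..
      qed
    qed
    show ?thesis using mono ne nb by blast
  qed
  have "is_composition_series p ?D ?a (k + l) R" unfolding is_composition_series_def
  proof (intro conjI)
    show "\<forall>i\<le>k + l. is_subfunctor p ?D ?a (R i)" using sub by blast
    show "\<forall>n. R 0 n = {\<zero>\<^bsub>?D n\<^esub>}" using zero by blast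
    show "\<forall>n. R (k + l) n = carrier (?D n)" using top by blast
    show "\<forall>i<k + l. (\<forall>n. R i n \<subseteq> R (Suc i) n) \<and> R i \<noteq> R (Suc i) \<and>
        \<not> (\<exists>U. is_subfunctor p ?D ?a U \<and> (\<forall>n. R i n \<subseteq> U n \<and> U n \<subseteq> R (Suc i) n) \<and>
               U \<noteq> R i \<and> U \<noteq> R (Suc i))" using step by blast
  qed
  then show ?thesis by (simp add: R_def)
qed

lemma dsum_finite:
  assumes "finite_vfunctor p F aF" "finite_vfunctor p G aG"
  shows "finite_vfunctor p (\<lambda>n. dsum (F n) (G n)) (dact aF aG)"
proof -
  obtain k S where "is_composition_series p F aF k S" using assms(1) unfolding finite_vfunctor_def by blast
  moreover obtain l T where "is_composition_series p G aG l T" using assms(2) unfolding finite_vfunctor_def by blast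
  ultimately show ?thesis using assms dsum_series dsum_vfunctor unfolding finite_vfunctor_def by blast
qed




lemma Fp_field: "prime p \<Longrightarrow> field (Fp p)"
  using residues_prime.is_field[of p] residues_prime.intro[of p] by simp

lemma Fp_carrier: "prime p \<Longrightarrow> carrier (Fp p) = {0..int p - 1}"
  by (simp add: residue_ring_def)

lemma Fp_simps: "\<zero>\<^bsub>Fp p\<^esub> = 0" "\<one>\<^bsub>Fp p\<^esub> = 1" "x \<oplus>\<^bsub>Fp p\<^esub> y = (x + y) mod int p" "x \<otimes>\<^bsub>Fp p\<^esub> y = (x * y) mod int p"
  by (simp_all add: residue_ring_def)

definition cfmod :: "nat \<Rightarrow> (int, nat) module" where
  "cfmod p = \<lparr>carrier = {x. int x \<in> carrier (Fp p)}, monoid.mult = (\<lambda>x y. x), one = 0, zero = 0,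
     add = (\<lambda>x y. nat (int x \<oplus>\<^bsub>Fp p\<^esub> int y)), smult = (\<lambda>a x. nat (a \<otimes>\<^bsub>Fp p\<^esub> int x))\<rparr>"

lemma cfmod_simps[simp]: "carrier (cfmod p) = {x. int x \<in> carrier (Fp p)}" "\<zero>\<^bsub>cfmod p\<^esub> = 0"
  "x \<oplus>\<^bsub>cfmod p\<^esub> y = nat (int x \<oplus>\<^bsub>Fp p\<^esub> int y)" "a \<odot>\<^bsub>cfmod p\<^esub> x = nat (a \<otimes>\<^bsub>Fp p\<^esub> int x)"
  by (simp_all add: cfmod_def)

lemma cfmod_module:
  assumes p: "prime p" shows "module (Fp p) (cfmod p)"
proof -
  interpret R: field "Fp p" by (rule Fp_field[OF p])
  have nn: "int (nat z) = z" if "z \<in> carrier (Fp p)" for z using that Fp_carrier[OF p] by auto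
  have z: "int 0 \<in> carrier (Fp p)" using R.zero_closed by (simp add: Fp_simps)
  have z': "(0::int) = \<zero>\<^bsub>Fp p\<^esub>" by (simp add: Fp_simps)
  have eqI: "x = y" if "int x = int y" for x y :: nat using that by simp
  show ?thesis
  proof (rule moduleI)
    show "cring (Fp p)" by (rule R.is_cring)
    show "abelian_group (cfmod p)"
    proof (rule abelian_groupI)
      fix x assume x: "x \<in> carrier (cfmod p)"
      show "\<exists>y \<in> carrier (cfmod p). y \<oplus>\<^bsub>cfmod p\<^esub> x = \<zero>\<^bsub>cfmod p\<^esub>"
      proof (intro bexI[of _ "nat (\<ominus>\<^bsub>Fp p\<^esub> int x)"])
        have c: "\<ominus>\<^bsub>Fp p\<^esub> int x \<in> carrier (Fp p)" using x by simp
        show "nat (\<ominus>\<^bsub>Fp p\<^esub> int x) \<in> carrier (cfmod p)" using c by (simp only: cfmod_simps mem_Collect_eq nn[OF c])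
        show "nat (\<ominus>\<^bsub>Fp p\<^esub> int x) \<oplus>\<^bsub>cfmod p\<^esub> x = \<zero>\<^bsub>cfmod p\<^esub>"
        proof -
          have xc: "int x \<in> carrier (Fp p)" using x by simp
          show ?thesis unfolding cfmod_simps nn[OF c] R.l_neg[OF xc] Fp_simps(1) by simp
        qed
      qed
    next
      fix x y z assume "x \<in> carrier (cfmod p)" "y \<in> carrier (cfmod p)" "z \<in> carrier (cfmod p)"
      then show "(x \<oplus>\<^bsub>cfmod p\<^esub> y) \<oplus>\<^bsub>cfmod p\<^esub> z = x \<oplus>\<^bsub>cfmod p\<^esub> (y \<oplus>\<^bsub>cfmod p\<^esub> z)"
        by (simp add: nn R.a_assoc del: int_nat_eq)
    next
      fix x y assume "x \<in> carrier (cfmod p)" "y \<in> carrier (cfmod p)"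
      then show "x \<oplus>\<^bsub>cfmod p\<^esub> y = y \<oplus>\<^bsub>cfmod p\<^esub> x" by (simp add: R.a_comm)
    next
      fix x assume x: "x \<in> carrier (cfmod p)"
      have "0 \<oplus>\<^bsub>Fp p\<^esub> int x = int x" using x z' R.l_zero by simp
      then show "\<zero>\<^bsub>cfmod p\<^esub> \<oplus>\<^bsub>cfmod p\<^esub> x = x" by simp
    qed (use z in \<open>auto simp: nn simp del: int_nat_eq\<close>)
  next
    fix a x assume "a \<in> carrier (Fp p)" "x \<in> carrier (cfmod p)"
    then show "a \<odot>\<^bsub>cfmod p\<^esub> x \<in> carrier (cfmod p)" by (simp add: nn del: int_nat_eq)
  next
    fix a b x assume "a \<in> carrier (Fp p)" "b \<in> carrier (Fp p)" "x \<in> carrier (cfmod p)"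
    then show "(a \<oplus>\<^bsub>Fp p\<^esub> b) \<odot>\<^bsub>cfmod p\<^esub> x = a \<odot>\<^bsub>cfmod p\<^esub> x \<oplus>\<^bsub>cfmod p\<^esub> b \<odot>\<^bsub>cfmod p\<^esub> x"
      by (simp add: nn R.l_distr del: int_nat_eq)
  next
    fix a x y assume "a \<in> carrier (Fp p)" "x \<in> carrier (cfmod p)" "y \<in> carrier (cfmod p)"
    then show "a \<odot>\<^bsub>cfmod p\<^esub> (x \<oplus>\<^bsub>cfmod p\<^esub> y) = a \<odot>\<^bsub>cfmod p\<^esub> x \<oplus>\<^bsub>cfmod p\<^esub> a \<odot>\<^bsub>cfmod p\<^esub> y"
      by (simp add: nn R.r_distr del: int_nat_eq)
  next
    fix a b x assume "a \<in> carrier (Fp p)" "b \<in> carrier (Fp p)" "x \<in> carrier (cfmod p)"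
    then show "(a \<otimes>\<^bsub>Fp p\<^esub> b) \<odot>\<^bsub>cfmod p\<^esub> x = a \<odot>\<^bsub>cfmod p\<^esub> (b \<odot>\<^bsub>cfmod p\<^esub> x)"
      by (simp add: nn R.m_assoc del: int_nat_eq)
  next
    fix x assume "x \<in> carrier (cfmod p)"
    then show "\<one>\<^bsub>Fp p\<^esub> \<odot>\<^bsub>cfmod p\<^esub> x = x" by simp
  qed
qed

definition cact :: "nat \<Rightarrow> nat \<Rightarrow> mat \<Rightarrow> nat \<Rightarrow> nat" where "cact m n A x = x"

lemma cfmod_vfunctor: "prime p \<Longrightarrow> is_vfunctor p (\<lambda>n. cfmod p) cact"
  unfolding is_vfunctor_def is_linear_def is_presheaf_def cact_def
  by (simp add: cfmod_module del: cfmod_simps)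

lemma zero_mor: "0 < p \<Longrightarrow> (\<lambda>i j. 0) \<in> mor p m n" by (simp add: mor_def)

lemma cfmod_finite:
  assumes p: "prime p" shows "finite_vfunctor p (\<lambda>n. cfmod p) cact"
proof -
  interpret R: field "Fp p" by (rule Fp_field[OF p])
  have V: "is_vfunctor p (\<lambda>n. cfmod p) cact" by (rule cfmod_vfunctor[OF p])
  have p1: "1 < p" using p prime_gt_1_nat by blast
  have nn: "int (nat z) = z" if "z \<in> carrier (Fp p)" for z using that Fp_carrier[OF p] by auto
  define S where "S = (\<lambda>(i::nat) (n::nat). if i = 0 then {0::nat} else carrier (cfmod p))"
  have one: "(1::nat) \<in> carrier (cfmod p)" using p1 Fp_carrier[OF p] by simp
  have S0: "S 0 = (\<lambda>n. {0})" "S (Suc 0) = (\<lambda>n. carrier (cfmod p))" unfolding S_def by simp_all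
  have nb: "\<not> (\<exists>T. is_subfunctor p (\<lambda>n. cfmod p) cact T \<and> (\<forall>n. {0} \<subseteq> T n \<and> T n \<subseteq> carrier (cfmod p)) \<and>
               T \<noteq> (\<lambda>n. {0}) \<and> T \<noteq> (\<lambda>n. carrier (cfmod p)))"
  proof
    assume "\<exists>T. is_subfunctor p (\<lambda>n. cfmod p) cact T \<and> (\<forall>n. {0} \<subseteq> T n \<and> T n \<subseteq> carrier (cfmod p)) \<and>
               T \<noteq> (\<lambda>n. {0}) \<and> T \<noteq> (\<lambda>n. carrier (cfmod p))"
    then obtain T where T: "is_subfunctor p (\<lambda>n. cfmod p) cact T" and b0: "\<forall>n. {0} \<subseteq> T n \<and> T n \<subseteq> carrier (cfmod p)"
      and ne0: "T \<noteq> (\<lambda>n. {0})" and ne1: "T \<noteq> (\<lambda>n. carrier (cfmod p))"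
      by blast
    have b: "T n \<subseteq> carrier (cfmod p)" for n using b0 by blast
    note t = sub_facts[OF V T]
    obtain n where "T n \<noteq> {0}" using ne0 by blast
    then obtain x where x: "x \<in> T n" "x \<noteq> 0" using b0 by blast
    have xall: "x \<in> T m" for m using t(6)[OF zero_mor[of p m n] x(1)] p1 by (simp add: cact_def)
    have xc: "int x \<in> carrier (Fp p)" using b x(1) by auto
    have xu: "int x \<in> Units (Fp p)" using xc x(2) R.field_Units by (auto simp: Fp_simps)
    have "T m = carrier (cfmod p)" for m
    proof
      show "T m \<subseteq> carrier (cfmod p)" by (rule b)
      show "carrier (cfmod p) \<subseteq> T m"
      proof
        fix y assume y: "y \<in> carrier (cfmod p)"
        define a where "a = int y \<otimes>\<^bsub>Fp p\<^esub> inv\<^bsub>Fp p\<^esub> int x"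
        have ac: "a \<in> carrier (Fp p)" using y xu by (simp add: a_def)
        have "a \<otimes>\<^bsub>Fp p\<^esub> int x = int y" using y xu xc by (simp add: a_def R.m_assoc)
        then have "a \<odot>\<^bsub>cfmod p\<^esub> x = y" by simp
        then show "y \<in> T m" using t(5)[OF ac xall[of m]] by simp
      qed
    qed
    then have "T = (\<lambda>n. carrier (cfmod p))" by (intro ext)
    then show False using ne1 by contradiction
  qed
  have "is_composition_series p (\<lambda>n. cfmod p) cact 1 S"
    unfolding is_composition_series_def
  proof (intro conjI allI impI)
    fix i :: nat assume "i \<le> 1"
    then have "i = 0 \<or> i = Suc 0" by auto
    then show "is_subfunctor p (\<lambda>n. cfmod p) cact (S i)"
      using zero_subfunctor[OF V] carrier_subfunctor[OF V] S0 by auto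
  next
    fix n show "S 0 n = {\<zero>\<^bsub>cfmod p\<^esub>}" by (simp add: S_def)
  next
    fix n show "S 1 n = carrier (cfmod p)" by (simp add: S_def)
  next
    fix i n :: nat assume "i < 1"
    then show "S i n \<subseteq> S (Suc i) n" using R.zero_closed by (simp add: S0 Fp_simps)
  next
    fix i :: nat assume "i < 1"
    then have i0: "i = 0" by simp
    show "S i \<noteq> S (Suc i)"
    proof
      assume "S i = S (Suc i)"
      then have "S 0 0 = S (Suc 0) 0" using i0 by simp
      then have "{0::nat} = carrier (cfmod p)" by (simp add: S0)
      then have "(1::nat) \<in> {0}" using one by (simp only:)
      then show False by simp
    qed
  next
    fix i :: nat assume "i < 1"
    then have i0: "i = 0" by simp
    show "\<not> (\<exists>T. is_subfunctor p (\<lambda>n. cfmod p) cact T \<and> (\<forall>n. S i n \<subseteq> T n \<and> T n \<subseteq> S (Suc i) n) \<and>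
               T \<noteq> S i \<and> T \<noteq> S (Suc i))"
      using nb unfolding i0 S0 .
  qed
  then show ?thesis using V unfolding finite_vfunctor_def by blast
qed




lemma ps_closed: "is_presheaf p X a \<Longrightarrow> A \<in> mor p m n \<Longrightarrow> x \<in> X n \<Longrightarrow> a m n A x \<in> X m"
  by (simp add: is_presheaf_def)
lemma ps_id: "is_presheaf p X a \<Longrightarrow> x \<in> X n \<Longrightarrow> a n n (idm n) x = x"
  by (simp add: is_presheaf_def)
lemma ps_comp: "is_presheaf p X a \<Longrightarrow> A \<in> mor p m n \<Longrightarrow> B \<in> mor p n k \<Longrightarrow> x \<in> X k \<Longrightarrow>
        a m n A (a n k B x) = a m k (comp p n B A) x"
  by (simp add: is_presheaf_def)

lemma nt_in: "is_mono p X a Y b \<eta> \<Longrightarrow> x \<in> X n \<Longrightarrow> \<eta> n x \<in> Y n"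
  by (simp add: is_mono_def is_nat_trans_def)
lemma nt_nat: "is_mono p X a Y b \<eta> \<Longrightarrow> A \<in> mor p m n \<Longrightarrow> x \<in> X n \<Longrightarrow> \<eta> m (a m n A x) = b m n A (\<eta> n x)"
  by (simp add: is_mono_def is_nat_trans_def)
lemma nt_inj: "is_mono p X a Y b \<eta> \<Longrightarrow> x \<in> X n \<Longrightarrow> y \<in> X n \<Longrightarrow> \<eta> n x = \<eta> n y \<Longrightarrow> x = y"
  by (auto simp: is_mono_def inj_on_def)

lemma sub_finite:
  assumes X: "finite_presheaf p X a" and U: "is_subpresheaf p U X a"
  shows "finite_presheaf p U a"
proof -
  obtain F :: "nat \<Rightarrow> (int, nat) module" and aF \<eta> where F: "finite_vfunctor p F aF"
    and m: "is_mono p X a (\<lambda>n. carrier (F n)) aF \<eta>" and P: "is_presheaf p X a"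
    using X unfolding finite_presheaf_def by blast
  have sub: "U n \<subseteq> X n" for n using U by (simp add: is_subpresheaf_def)
  have PU: "is_presheaf p U a" unfolding is_presheaf_def
  proof (intro conjI allI impI)
    fix m n A x assume "A \<in> mor p m n" "x \<in> U n" then show "a m n A x \<in> U m"
      using U by (simp add: is_subpresheaf_def)
  next
    fix n x assume "x \<in> U n" then show "a n n (idm n) x = x" using ps_id[OF P] sub by blast
  next
    fix m n k A B x assume "A \<in> mor p m n" "B \<in> mor p n k" "x \<in> U k"
    then show "a m n A (a n k B x) = a m k (comp p n B A) x" using ps_comp[OF P] sub by blast
  qed
  have "is_mono p U a (\<lambda>n. carrier (F n)) aF \<eta>"
    unfolding is_mono_def is_nat_trans_def
  proof (intro conjI allI impI)
    fix n x assume "x \<in> U n" then show "\<eta> n x \<in> carrier (F n)" using nt_in[OF m] sub by blast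
  next
    fix m n A x assume "A \<in> mor p m n" "x \<in> U n" then show "\<eta> m (a m n A x) = aF m n A (\<eta> n x)"
      using nt_nat[OF m] sub by blast
  next
    fix n show "inj_on (\<eta> n) (U n)" using nt_inj[OF m] sub unfolding inj_on_def by blast
  qed
  then show ?thesis using PU F unfolding finite_presheaf_def by blast
qed

lemma prod_finite:
  assumes X: "finite_presheaf p X aX" and Y: "finite_presheaf p Y aY"
  shows "finite_presheaf p (prod_obj X Y) (prod_act aX aY)"
proof -
  obtain F :: "nat \<Rightarrow> (int, nat) module" and aF \<eta> where F: "finite_vfunctor p F aF"
    and m: "is_mono p X aX (\<lambda>n. carrier (F n)) aF \<eta>" and P: "is_presheaf p X aX"
    using X unfolding finite_presheaf_def by blast
  obtain G :: "nat \<Rightarrow> (int, nat) module" and aG \<theta> where G: "finite_vfunctor p G aG"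
    and m': "is_mono p Y aY (\<lambda>n. carrier (G n)) aG \<theta>" and Q: "is_presheaf p Y aY"
    using Y unfolding finite_presheaf_def by blast
  have PQ: "is_presheaf p (prod_obj X Y) (prod_act aX aY)" unfolding is_presheaf_def prod_obj_def prod_act_def
    using ps_closed[OF P] ps_closed[OF Q] ps_id[OF P] ps_id[OF Q] ps_comp[OF P] ps_comp[OF Q] by auto
  define \<zeta> where "\<zeta> n = (\<lambda>(x, y). pe (\<eta> n x) (\<theta> n y))" for n
  have "is_mono p (prod_obj X Y) (prod_act aX aY) (\<lambda>n. carrier (dsum (F n) (G n))) (dact aF aG) \<zeta>"
    unfolding is_mono_def is_nat_trans_def
  proof (intro conjI allI impI)
    fix n z assume "z \<in> prod_obj X Y n" then show "\<zeta> n z \<in> carrier (dsum (F n) (G n))"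
      using nt_in[OF m] nt_in[OF m'] by (auto simp: \<zeta>_def prod_obj_def)
  next
    fix m n A z assume "A \<in> mor p m n" "z \<in> prod_obj X Y n"
    then show "\<zeta> m (prod_act aX aY m n A z) = dact aF aG m n A (\<zeta> n z)"
      using nt_nat[OF m] nt_nat[OF m'] by (auto simp: \<zeta>_def prod_obj_def prod_act_def dact_def)
  next
    fix n show "inj_on (\<zeta> n) (prod_obj X Y n)"
      using nt_inj[OF m] nt_inj[OF m'] unfolding inj_on_def by (auto simp: \<zeta>_def prod_obj_def)
  qed
  then show ?thesis using PQ dsum_finite[OF F G] unfolding finite_presheaf_def by blast
qed

lemma copr_finite:
  assumes p: "prime p" and X: "finite_presheaf p X aX" and Y: "finite_presheaf p Y aY"
  shows "finite_presheaf p (copr_obj X Y) (copr_act aX aY)"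
proof -
  obtain F :: "nat \<Rightarrow> (int, nat) module" and aF \<eta> where F: "finite_vfunctor p F aF"
    and m: "is_mono p X aX (\<lambda>n. carrier (F n)) aF \<eta>" and P: "is_presheaf p X aX"
    using X unfolding finite_presheaf_def by blast
  obtain G :: "nat \<Rightarrow> (int, nat) module" and aG \<theta> where G: "finite_vfunctor p G aG"
    and m': "is_mono p Y aY (\<lambda>n. carrier (G n)) aG \<theta>" and Q: "is_presheaf p Y aY"
    using Y unfolding finite_presheaf_def by blast
  have FV: "is_vfunctor p F aF" and GV: "is_vfunctor p G aG" using F G by (simp_all add: finite_vfunctor_def)
  have p1: "1 < p" using p prime_gt_1_nat by blast
  have one: "(1::nat) \<in> carrier (cfmod p)" "(0::nat) \<in> carrier (cfmod p)" using p1 Fp_carrier[OF p] by simp_all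
  have PQ: "is_presheaf p (copr_obj X Y) (copr_act aX aY)" unfolding is_presheaf_def
  proof (intro conjI allI impI)
    fix m n A z assume "A \<in> mor p m n" "z \<in> copr_obj X Y n" then show "copr_act aX aY m n A z \<in> copr_obj X Y m"
      using ps_closed[OF P] ps_closed[OF Q] by (auto simp: copr_obj_def copr_act_def)
  next
    fix n z assume "z \<in> copr_obj X Y n" then show "copr_act aX aY n n (idm n) z = z"
      using ps_id[OF P] ps_id[OF Q] by (auto simp: copr_obj_def copr_act_def)
  next
    fix m n k A B z assume "A \<in> mor p m n" "B \<in> mor p n k" "z \<in> copr_obj X Y k"
    then show "copr_act aX aY m n A (copr_act aX aY n k B z) = copr_act aX aY m k (comp p n B A) z"
      using ps_comp[OF P] ps_comp[OF Q] by (auto simp: copr_obj_def copr_act_def)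
  qed
  define \<zeta> where "\<zeta> n = case_sum (\<lambda>x. pe (pe (\<eta> n x) \<zero>\<^bsub>G n\<^esub>) 0) (\<lambda>y. pe (pe \<zero>\<^bsub>F n\<^esub> (\<theta> n y)) 1)" for n
  have "is_mono p (copr_obj X Y) (copr_act aX aY) (\<lambda>n. carrier (dsum (dsum (F n) (G n)) (cfmod p))) (dact (dact aF aG) cact) \<zeta>"
    unfolding is_mono_def is_nat_trans_def
  proof (intro conjI allI impI)
    fix n z assume "z \<in> copr_obj X Y n" then show "\<zeta> n z \<in> carrier (dsum (dsum (F n) (G n)) (cfmod p))"
      using nt_in[OF m] nt_in[OF m'] one vfz[OF FV] vfz[OF GV] by (auto simp: \<zeta>_def copr_obj_def simp del: cfmod_simps)
  next
    fix m n A z assume "A \<in> mor p m n" "z \<in> copr_obj X Y n"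
    then show "\<zeta> m (copr_act aX aY m n A z) = dact (dact aF aG) cact m n A (\<zeta> n z)"
      using nt_nat[OF m] nt_nat[OF m'] vf_zero[OF FV] vf_zero[OF GV]
      by (auto simp: \<zeta>_def copr_obj_def copr_act_def dact_def cact_def)
  next
    fix n show "inj_on (\<zeta> n) (copr_obj X Y n)"
      using nt_inj[OF m] nt_inj[OF m'] unfolding inj_on_def by (auto simp: \<zeta>_def copr_obj_def)
  qed
  then show ?thesis using PQ dsum_finite[OF dsum_finite[OF F G] cfmod_finite[OF p]]
    unfolding finite_presheaf_def by blast
qed

lemma comp_zero: "comp p n (\<lambda>i j. 0) A = (\<lambda>i j. 0)"
  by (simp add: comp_def)

lemma bp_facts:
  assumes P: "is_presheaf p X a" and c: "connected X" and p: "0 < p"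
  shows "basepoint X a n \<in> X n" "A \<in> mor p m n \<Longrightarrow> a m n A (basepoint X a n) = basepoint X a m"
proof -
  obtain e where e: "X 0 = {e}" using c unfolding connected_def by (auto simp: card_Suc_eq)
  have te: "the_elem (X 0) \<in> X 0" using e by simp
  show "basepoint X a n \<in> X n" unfolding basepoint_def by (rule ps_closed[OF P zero_mor[OF p] te])
  assume A: "A \<in> mor p m n"
  show "a m n A (basepoint X a n) = basepoint X a m"
    unfolding basepoint_def ps_comp[OF P A zero_mor[OF p] te] comp_zero ..
qed

lemma wedge_sub:
  assumes P: "is_presheaf p X aX" and Q: "is_presheaf p Y aY" and cX: "connected X" and cY: "connected Y"
    and p: "0 < p"
  shows "is_subpresheaf p (wedge_obj X aX Y aY) (prod_obj X Y) (prod_act aX aY)"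
  unfolding is_subpresheaf_def
proof (intro conjI allI impI)
  note bx = bp_facts[OF P cX p] and bY = bp_facts[OF Q cY p]
  fix n show "wedge_obj X aX Y aY n \<subseteq> prod_obj X Y n"
    using bx(1) bY(1) by (auto simp: wedge_obj_def prod_obj_def)
next
  note bx = bp_facts[OF P cX p] and bY = bp_facts[OF Q cY p]
  fix m n A z assume A: "A \<in> mor p m n" and z: "z \<in> wedge_obj X aX Y aY n"
  then show "prod_act aX aY m n A z \<in> wedge_obj X aX Y aY m"
    using bx(2)[OF A] bY(2)[OF A] ps_closed[OF P A] ps_closed[OF Q A]
    by (auto simp: wedge_obj_def prod_act_def)
qed

theorem lemma3p4:
  fixes p :: nat
    and X :: "nat \<Rightarrow> 'a set" and aX :: "nat \<Rightarrow> nat \<Rightarrow> mat \<Rightarrow> 'a \<Rightarrow> 'a"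
    and Y :: "nat \<Rightarrow> 'b set" and aY :: "nat \<Rightarrow> nat \<Rightarrow> mat \<Rightarrow> 'b \<Rightarrow> 'b"
  assumes "prime p"
    and "finite_presheaf p X aX"
    and "finite_presheaf p Y aY"
  shows "finite_presheaf p (copr_obj X Y) (copr_act aX aY) \<and>
         finite_presheaf p (prod_obj X Y) (prod_act aX aY) \<and>
         (\<forall>U. is_subpresheaf p U X aX \<longrightarrow> finite_presheaf p U aX) \<and>
         (connected X \<and> connected Y \<longrightarrow>
            finite_presheaf p (wedge_obj X aX Y aY) (prod_act aX aY))"
proof (intro conjI allI impI)
  show "finite_presheaf p (copr_obj X Y) (copr_act aX aY)" by (rule copr_finite[OF assms])
  show "finite_presheaf p (prod_obj X Y) (prod_act aX aY)" by (rule prod_finite[OF assms(2,3)])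
  fix U assume "is_subpresheaf p U X aX" then show "finite_presheaf p U aX" by (rule sub_finite[OF assms(2)])
next
  assume c: "connected X \<and> connected Y"
  have p: "0 < p" using assms(1) prime_gt_0_nat by blast
  have P: "is_presheaf p X aX" "is_presheaf p Y aY" using assms(2,3) by (simp_all add: finite_presheaf_def)
  show "finite_presheaf p (wedge_obj X aX Y aY) (prod_act aX aY)"
    by (rule sub_finite[OF prod_finite[OF assms(2,3)] wedge_sub[OF P(1) P(2) _ _ p]]) (use c in auto)
qed


end
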